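(* Let $k$ be a positive integer, $q=4^k$, and $\Lambda:=\mathbb{F}_{4^k}\setminus\{-1,-\xi,-\xi^2\}$ (note $-1=1$ in characteristic $2$). Then $$\sum_{a\in\Lambda}\left[\eta\Big(\frac{a^2+a+1}{a^2+1}\Big)+\eta^2\Big(\frac{a^2+a+1}{a^2+1}\Big)\right]=-2+(-2)^{k+1}.$$
   Context: Here $q=4^k\equiv 1\pmod 3$. Let $\xi\in\mathbb{F}_q$ be a fixed cube root of unity with $\xi\neq 1$, and let $\delta\in\mathbb{C}$ be a fixed cube root of unity with $\delta\neq1$. Let $\eta:\mathbb{F}_q\to\mathbb{C}$ be the cubic multiplicative character defined by $\eta(0)=0$ and, for $c\in\mathbb{F}_q^*$ and integers $j$, $\eta(c)=\delta^j$ if and only if $c^{\frac{q-1}{3}}=\xi^j$. We write $\eta^2(c)$ for $\eta(c)^2$. *)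

theory Defs
  imports Complex_Main
begin

text \<open>Cubic multiplicative character of a finite field F_q (q = 1 mod 3), relative to a
  fixed nontrivial cube root of unity xi in F_q and a fixed nontrivial complex cube root
  of unity delta: eta(0) = 0 and eta(c) = delta^j iff c^((q-1)/3) = xi^j.\<close>
definition cubic_char :: "'a::{field,finite} \<Rightarrow> complex \<Rightarrow> 'a \<Rightarrow> complex" where
  "cubic_char xi delta c =
     (if c = 0 then 0
      else delta ^ (SOME j::nat. c ^ ((card (UNIV::'a set) - 1) div 3) = xi ^ j))"

end

theory Submission
  imports Defs "HOL-Computational_Algebra.Polynomial"
begin

definition cubes :: "'a::field set" where "cubes = {c. \<exists>y. y \<noteq> 0 \<and> c = y^3}"

definition hh :: "'a::field \<Rightarrow> 'a" where "hh u = u^2 + u"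
definition psi :: "'a::field \<Rightarrow> int" where "psi v = (if v \<in> range hh then 1 else -1)"
definition TT :: "'a::{field,finite} \<Rightarrow> int" where "TT c = (\<Sum>y\<in>UNIV. psi (c * y^3))"

locale L =
  fixes xi :: "'a::{field,finite}" and k :: nat
  assumes kpos: "k > 0" and qcard: "card (UNIV::'a set) = 4 ^ k"
    and xi3: "xi ^ 3 = 1" and xi1: "xi \<noteq> 1"
begin

definition m :: nat where "m = (4^k - 1) div 3"

lemma two_zero: "(2::'a) = 0"
proof -
  have "(\<Sum>x\<in>UNIV. x) = (\<Sum>x\<in>UNIV. x + (1::'a))"
    by (rule sum.reindex_bij_witness[of _ "\<lambda>x. x + 1" "\<lambda>x. x - 1"]) auto
  also have "\<dots> = (\<Sum>x\<in>UNIV. x) + of_nat (card (UNIV::'a set))" by (simp add: sum.distrib)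
  finally have "(of_nat (card (UNIV::'a set)) :: 'a) = 0" by simp
  hence "(of_nat (2 ^ (2*k)) :: 'a) = 0" using qcard by (simp add: power_mult)
  hence "(2::'a) ^ (2*k) = 0" by simp
  thus ?thesis by simp
qed

lemma neg_eq : "- (x::'a) = x"
proof -
  have "x + x = 0" using two_zero by (metis mult_2 mult_zero_left)
  thus ?thesis by (metis eq_neg_iff_add_eq_0)
qed

lemma minus_eq : "(x::'a) - y = x + y"
  by (metis diff_minus_eq_add neg_eq)

lemma add_self : "(x::'a) + x = 0"
  by (metis diff_self minus_eq)

lemma q_ge: "(4::nat)^k \<ge> 4" using kpos
  by (metis One_nat_def Suc_leI power_increasing power_one_right zero_less_numeral one_le_numeral)

lemma four_pow_mod: "(4::nat)^n mod 3 = 1"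
proof (induction n)
  case (Suc n)
  have "(4::nat)^Suc n mod 3 = 4 * (4^n mod 3) mod 3" by (simp add: mod_mult_right_eq)
  thus ?case using Suc by simp
qed simp

lemma three_m: "3 * m = 4^k - 1"
proof -
  have "(4::nat)^k mod 3 = 1" using four_pow_mod .
  hence "(4::nat)^k = 3 * ((4::nat)^k div 3) + 1" by (metis div_mult_mod_eq mult.commute)
  hence e: "(4::nat)^k - 1 = 3 * ((4::nat)^k div 3)" by linarith
  show ?thesis unfolding m_def e by simp
qed

lemma m_pos: "m > 0" using three_m q_ge by linarith

lemma fermat: assumes "(x::'a) \<noteq> 0" shows "x ^ (4^k - 1) = 1"
proof -
  let ?N = "UNIV - {0::'a}"
  have "(\<Prod>y\<in>?N. y) = (\<Prod>y\<in>?N. x * y)"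
    by (rule prod.reindex_bij_witness[of _ "\<lambda>y. x * y" "\<lambda>y. y / x"]) (use assms in auto)
  also have "\<dots> = x ^ card ?N * (\<Prod>y\<in>?N. y)" by (simp add: prod.distrib)
  finally have eq: "(\<Prod>y\<in>?N. y) = x ^ card ?N * (\<Prod>y\<in>?N. y)" .
  have "(\<Prod>y\<in>?N. y) \<noteq> 0" by (subst prod_zero_iff) auto
  with eq have "x ^ card ?N = 1" by simp
  moreover have "card ?N = 4^k - 1" by (simp add: card_Diff_singleton qcard)
  ultimately show ?thesis by simp
qed

lemma xi_quad: "xi^2 + xi + 1 = 0"
proof -
  have "(xi - 1) * (xi^2 + xi + 1) = 0" using xi3 by (simp add: algebra_simps power2_eq_square power3_eq_cube)
  thus ?thesis using xi1 by auto
qed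

lemma xi_sq_ne1: "xi^2 \<noteq> 1"
proof
  assume h: "xi^2 = 1"
  have "xi^3 = xi * xi^2" by (simp add: power2_eq_square power3_eq_cube)
  thus False using h xi3 xi1 by simp
qed

lemma xi_ne0: "xi \<noteq> 0" using xi3 by auto

lemma cube_roots1: "e^3 = (1::'a) \<longleftrightarrow> e = 1 \<or> e = xi \<or> e = xi^2"
proof -
  have "(e - 1) * (e - xi) * (e - xi^2) = e^3 - e^2 * (xi^2 + xi + 1) + e * (xi^2+xi + xi^3) - xi^3"
    by (simp add: algebra_simps power2_eq_square power3_eq_cube)
  also have "xi^2 + xi + xi^3 = 0" using xi_quad xi3 by (simp add: add.commute)
  finally have "e^3 - 1 = (e - 1) * (e - xi) * (e - xi^2)" using xi_quad xi3 by simp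
  hence "e^3 = 1 \<longleftrightarrow> (e - 1) * (e - xi) * (e - xi^2) = 0" by (metis eq_iff_diff_eq_0)
  thus ?thesis by (simp only: mult_eq_0_iff eq_iff_diff_eq_0[symmetric] disj_assoc)
qed

lemma xi_ne_xi2: "xi \<noteq> xi^2"
proof
  assume "xi = xi^2"
  hence "xi * 1 = xi * xi" by (simp add: power2_eq_square)
  hence "1 = xi" using xi_ne0 by (metis mult_left_cancel)
  thus False using xi1 by simp
qed

lemma cube_fiber: assumes "(y::'a) \<noteq> 0" shows "{z. z^3 = y^3} = {y, xi*y, xi^2*y}"
proof -
  have "z^3 = y^3 \<longleftrightarrow> z = y \<or> z = xi*y \<or> z = xi^2*y" for z
  proof -
    have "z^3 = y^3 \<longleftrightarrow> (z/y)^3 = 1" using assms by (simp add: power_divide)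
    also have "\<dots> \<longleftrightarrow> z/y = 1 \<or> z/y = xi \<or> z/y = xi^2" by (rule cube_roots1)
    also have "\<dots> \<longleftrightarrow> z = y \<or> z = xi*y \<or> z = xi^2*y" using assms by (auto simp: field_simps)
    finally show ?thesis .
  qed
  thus ?thesis by auto
qed

lemma card_cube_fiber: assumes "(y::'a) \<noteq> 0" shows "card {z. z^3 = y^3} = 3"
proof -
  have "y \<noteq> xi*y" using assms xi1 by auto
  moreover have "y \<noteq> xi^2*y" using assms xi_sq_ne1 by auto
  moreover have "xi*y \<noteq> xi^2*y" using assms xi_ne_xi2 by auto
  ultimately show ?thesis unfolding cube_fiber[OF assms] by simp
qed

lemma card_fiber_gen: "card {z::'a. z^3 = c} = (if c \<in> cubes then 3 else if c = 0 then 1 else 0)"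
proof (cases "c \<in> cubes")
  case True
  then obtain y where y: "y \<noteq> 0" "c = y^3" unfolding cubes_def by auto
  thus ?thesis using card_cube_fiber True by simp
next
  case False
  show ?thesis
  proof (cases "c = 0")
    case True
    hence "{z::'a. z^3 = c} = {0}" by auto
    thus ?thesis using True False by simp
  next
    case c0: False
    have "{z::'a. z^3 = c} = {}" using False c0 unfolding cubes_def by auto
    thus ?thesis using False c0 by simp
  qed
qed

lemma card_cubes: "card (cubes :: 'a set) = m"
proof -
  have "(\<Sum>c\<in>cubes. \<Sum>y\<in>{y. y \<in> UNIV - {0::'a} \<and> y^3 = c}. (1::nat)) = (\<Sum>y\<in>UNIV - {0::'a}. 1)"
    by (rule sum.group) (auto simp: cubes_def)
  hence "card (UNIV - {0::'a}) = (\<Sum>c\<in>cubes. card {y. y \<in> UNIV - {0::'a} \<and> y^3 = c})" by simp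
  also have "\<dots> = (\<Sum>c\<in>(cubes::'a set). 3)"
  proof (rule sum.cong)
    fix c assume "c \<in> (cubes::'a set)"
    then obtain y where y: "y \<noteq> 0" "c = y^3" unfolding cubes_def by auto
    have "{y'. y' \<in> UNIV - {0::'a} \<and> y'^3 = c} = {z. z^3 = y^3}" using y by auto
    thus "card {y'. y' \<in> UNIV - {0::'a} \<and> y'^3 = c} = 3" using card_cube_fiber[OF y(1)] by simp
  qed simp
  finally have "4^k - 1 = 3 * card (cubes :: 'a set)" by (simp add: card_Diff_singleton qcard)
  thus ?thesis using three_m by linarith
qed

lemma roots_bound: "card {c::'a. c \<noteq> 0 \<and> c^m = 1} \<le> m"
proof -
  define p :: "'a poly" where "p = monom 1 m - 1"
  have pe: "poly p x = x^m - 1" for x by (simp add: p_def poly_monom)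
  have "p \<noteq> 0" proof
    assume "p = 0" hence "poly p 0 = 0" by simp
    thus False using pe[of 0] m_pos by (simp add: power_0_left)
  qed
  have dp: "degree p \<le> m" unfolding p_def by (rule degree_diff_le) (auto simp: degree_monom_le)
  have "card {c::'a. c \<noteq> 0 \<and> c^m = 1} \<le> card {x. poly p x = 0}"
    by (rule card_mono) (auto simp: pe)
  also have "\<dots> \<le> degree p" by (rule card_poly_roots_bound) fact
  finally show ?thesis using dp by linarith
qed

lemma cubes_char: assumes "(c::'a) \<noteq> 0" shows "c^m = 1 \<longleftrightarrow> c \<in> cubes"
proof -
  have sub: "(cubes::'a set) \<subseteq> {c. c \<noteq> 0 \<and> c^m = 1}"
  proof
    fix c assume "c \<in> (cubes::'a set)"
    then obtain y where y: "y \<noteq> 0" "c = y^3" unfolding cubes_def by auto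
    have "c^m = y^(3*m)" using y by (simp add: power_mult)
    also have "\<dots> = 1" using three_m fermat[OF y(1)] by simp
    finally show "c \<in> {c. c \<noteq> 0 \<and> c^m = 1}" using y by simp
  qed
  have "(cubes::'a set) = {c. c \<noteq> 0 \<and> c^m = 1}"
    by (rule card_subset_eq[OF _ sub]) (use roots_bound card_cubes card_mono[OF _ sub] in auto)
  thus ?thesis using assms by auto
qed

lemma pow_m_cube: assumes "(c::'a) \<noteq> 0" shows "(c^m)^3 = 1"
  using fermat[OF assms] three_m by (simp add: power_mult[symmetric] mult.commute)

lemma xi_pow_mod: "xi ^ j = xi ^ (j mod 3)"
proof -
  have "xi^j = xi^(3*(j div 3) + j mod 3)" by (simp only: mult_div_mod_eq)
    also have "\<dots> = (xi^3)^(j div 3) * xi^(j mod 3)" by (simp only: power_add power_mult)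
    finally have "xi^j = (xi^3)^(j div 3) * xi^(j mod 3)" .
  thus ?thesis using xi3 by simp
qed

lemma chi_val:
  assumes c0: "(c::'a) \<noteq> 0" and d3: "delta^3 = (1::complex)" and d1: "delta \<noteq> 1"
  shows "cubic_char xi delta c + (cubic_char xi delta c)^2 = (if c^m = 1 then 2 else -1)"
proof -
  have cm: "(card (UNIV::'a set) - 1) div 3 = m" by (simp add: qcard m_def)
  have "c^m = 1 \<or> c^m = xi \<or> c^m = xi^2" using pow_m_cube[OF c0] cube_roots1 by blast
  hence ex: "\<exists>j::nat. c^m = xi^j" by (metis power_0 power_one_right)
  define j where "j = (SOME j::nat. c^m = xi^j)"
  have j: "c^m = xi^j" using someI_ex[OF ex] unfolding j_def .
  have cc: "cubic_char xi delta c = delta^j" unfolding cubic_char_def cm j_def using c0 by simp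
  have dq: "delta^2 + delta + 1 = 0"
  proof -
    have "(delta - 1) * (delta^2 + delta + 1) = 0" using d3
      by (simp add: algebra_simps power2_eq_square power3_eq_cube)
    thus ?thesis using d1 by auto
  qed
  have dmod: "delta^j = delta^(j mod 3)"
  proof -
    have "delta^j = delta^(3*(j div 3) + j mod 3)" by (simp only: mult_div_mod_eq)
    also have "\<dots> = (delta^3)^(j div 3) * delta^(j mod 3)" by (simp only: power_add power_mult)
    finally have "delta^j = (delta^3)^(j div 3) * delta^(j mod 3)" .
    thus ?thesis using d3 by simp
  qed
  have xj: "c^m = xi^(j mod 3)" using j xi_pow_mod by simp
  have "j mod 3 = 0 \<or> j mod 3 = 1 \<or> j mod 3 = 2" by linarith
  moreover {
    assume "j mod 3 = 0"
    hence ?thesis using xj dmod cc by simp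
  }
  moreover {
    assume h: "j mod 3 = 1"
    hence "c^m \<noteq> 1" using xj xi1 by simp
    moreover have "delta + delta^2 = -1" using dq by (simp add: algebra_simps eq_neg_iff_add_eq_0)
    ultimately have ?thesis using h dmod cc by simp
  }
  moreover {
    assume h: "j mod 3 = 2"
    hence "c^m \<noteq> 1" using xj xi_sq_ne1 by simp
    moreover have "(delta^2)^2 = delta"
    proof -
      have "(delta^2)^2 = delta^3 * delta" by (simp add: power2_eq_square power3_eq_cube algebra_simps)
      thus ?thesis using d3 by simp
    qed
    moreover have "delta^2 + delta = -1" using dq by (simp add: algebra_simps eq_neg_iff_add_eq_0)
    ultimately have ?thesis using h dmod cc by simp
  }
  ultimately show ?thesis by metis
qed

lemma sq_add: "((x::'a) + y)^2 = x^2 + y^2"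
proof -
  have "(x+y)^2 = x^2 + y^2 + (x*y + x*y)" by (simp add: power2_eq_square algebra_simps)
  thus ?thesis using add_self[of "x*y"] by simp
qed

lemma hh_add: "hh ((u::'a) + v) = hh u + hh v"
  unfolding hh_def sq_add by (simp add: algebra_simps)

lemma hh_0: "hh (0::'a) = 0" by (simp add: hh_def)

lemma hh_eq: "hh (u::'a) = hh v \<longleftrightarrow> u = v \<or> u = v + 1"
proof -
  have "hh u = hh v \<longleftrightarrow> hh u + hh v = 0" by (metis add_self add_right_cancel add_0)
  also have "\<dots> \<longleftrightarrow> hh (u + v) = 0" by (simp add: hh_add)
  also have "\<dots> \<longleftrightarrow> (u + v) * (u + v + 1) = 0" by (simp add: hh_def power2_eq_square algebra_simps)
  also have "\<dots> \<longleftrightarrow> u + v = 0 \<or> u + v + 1 = 0" by simp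
  also have "\<dots> \<longleftrightarrow> u = v \<or> u = v + 1"
    by (metis add_self add.assoc add.commute add_0 add_right_cancel)
  finally show ?thesis .
qed

lemma one_ne0: "(1::'a) \<noteq> 0" by simp

lemma fiber_hh: "card {u::'a. hh u = v} = (if v \<in> range hh then 2 else 0)"
proof (cases "v \<in> range hh")
  case True
  then obtain u0 where u0: "v = hh u0" by auto
  have "{u. hh u = v} = {u0, u0 + 1}" using hh_eq u0 by auto
  moreover have "u0 \<noteq> u0 + 1" by simp
  ultimately show ?thesis using True by simp
next
  case False
  hence "{u::'a. hh u = v} = {}" by auto
  thus ?thesis using False by simp
qed

lemma card_H: "2 * card (range (hh::'a \<Rightarrow> 'a)) = 4^k"
proof -
  have "(\<Sum>v\<in>range hh. \<Sum>u\<in>{u. u \<in> (UNIV::'a set) \<and> hh u = v}. (1::nat)) = (\<Sum>u\<in>(UNIV::'a set). 1)"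
    by (rule sum.group) auto
  hence "(\<Sum>v\<in>range (hh::'a\<Rightarrow>'a). card {u. hh u = v}) = 4^k" by (simp add: qcard)
  moreover have "(\<Sum>v\<in>range (hh::'a\<Rightarrow>'a). card {u. hh u = v}) = (\<Sum>v\<in>range (hh::'a\<Rightarrow>'a). 2)"
    by (rule sum.cong) (auto simp: fiber_hh)
  ultimately show ?thesis by simp
qed

lemma card_H_compl: "card (- range (hh::'a \<Rightarrow> 'a)) = card (range (hh::'a \<Rightarrow> 'a))"
proof -
  have "card (- range (hh::'a \<Rightarrow> 'a)) = 4^k - card (range (hh::'a \<Rightarrow> 'a))"
    using card_Diff_subset[of "range (hh::'a \<Rightarrow> 'a)" UNIV] qcard by (simp add: Compl_eq_Diff_UNIV)
  thus ?thesis using card_H by linarith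
qed

lemma H_add: assumes "x \<in> range hh" "y \<in> range hh" shows "(x::'a) + y \<in> range hh"
proof -
  obtain a b where "x = hh a" "y = hh b" using assms by auto
  hence "x + y = hh (a + b)" by (simp add: hh_add)
  thus ?thesis by simp
qed

lemma H_sub: assumes "x \<in> range hh" "x + y \<in> range hh" shows "(y::'a) \<in> range hh"
proof -
  have e: "x + (x + y) = y" by (metis add.assoc add_self add_0)
  show ?thesis using H_add[OF assms] unfolding e .
qed

lemma psi_add: "psi ((v::'a) + w) = psi v * psi w"
proof (cases "v \<in> range hh")
  case True
  have "v + w \<in> range hh \<longleftrightarrow> w \<in> range hh" using H_add[OF True] H_sub[OF True] by blast
  thus ?thesis unfolding psi_def using True by simp
next
  case vH: False
  show ?thesis
  proof (cases "w \<in> range hh")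
    case True
    have "w + v \<in> range hh \<longleftrightarrow> v \<in> range hh" using H_add[OF True] H_sub[OF True] by blast
    hence "v + w \<notin> range hh" using vH by (simp add: add.commute)
    thus ?thesis unfolding psi_def using True vH by simp
  next
    case wH: False
    have inj: "inj_on (\<lambda>x. x + v) (range hh)" by (auto simp: inj_on_def)
    have sub: "(\<lambda>x. x + v) ` range hh \<subseteq> - range hh" using vH H_sub by auto
    have "card ((\<lambda>x. x + v) ` range (hh::'a\<Rightarrow>'a)) = card (- range (hh::'a\<Rightarrow>'a))"
      using card_image[OF inj] card_H_compl by simp
    hence eq: "(\<lambda>x. x + v) ` range hh = - range hh"
      by (intro card_subset_eq[OF _ sub]) auto
    then obtain x where x: "x \<in> range hh" "w = x + v" using wH by blast
    have "v + w = x" using x(2) by (metis add.commute add.left_commute add_self add_0_right)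
    thus ?thesis unfolding psi_def using vH wH x(1) by simp
  qed
qed

lemma psi_0: "psi (0::'a) = 1" unfolding psi_def using hh_0 by (metis rangeI)

lemma psi_1: "psi (1::'a) = 1"
proof -
  have "hh xi = 1" unfolding hh_def using xi_quad
    by (metis add.assoc add_self add_0 add.commute add_left_cancel)
  thus ?thesis unfolding psi_def by (metis rangeI)
qed

lemma psi_hh: "psi (hh (u::'a)) = 1" unfolding psi_def by simp

lemma psi_sq: "psi ((x::'a)^2) = psi x"
proof -
  have "x^2 = x + hh x" unfolding hh_def by (metis add.assoc add.commute add_self add_0)
  thus ?thesis using psi_add psi_hh by simp
qed

lemma sum_psi: "(\<Sum>c\<in>UNIV. psi (c::'a)) = 0"
proof -
  have "(\<Sum>c\<in>UNIV. psi (c::'a)) = (\<Sum>c\<in>UNIV. if c \<in> range (hh::'a\<Rightarrow>'a) then 1 else -1)"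
    unfolding psi_def ..
  also have "\<dots> = (\<Sum>c\<in>UNIV \<inter> {c. c \<in> range (hh::'a\<Rightarrow>'a)}. 1) + (\<Sum>c\<in>UNIV \<inter> - {c. c \<in> range (hh::'a\<Rightarrow>'a)}. -1)"
    by (rule sum.If_cases) simp
  also have "\<dots> = int (card (range (hh::'a\<Rightarrow>'a))) - int (card (- range (hh::'a\<Rightarrow>'a)))"
    by simp
  finally show ?thesis using card_H_compl by simp
qed

lemma mult_bij: assumes "(w::'a) \<noteq> 0" shows "bij_betw (\<lambda>c. c * w) UNIV UNIV"
proof -
  have "inj (\<lambda>c. c * w)" using assms by (auto intro: injI)
  thus ?thesis using finite_UNIV_inj_surj[of "\<lambda>c. c * w"] by (simp add: bij_betw_def)
qed

lemma sum_mult_bij: assumes "(w::'a) \<noteq> 0" shows "(\<Sum>c\<in>UNIV. f (c * w)) = (\<Sum>c\<in>UNIV. f c)"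
  using sum.reindex_bij_betw[OF mult_bij[OF assms], of f] .

lemma sum_mult_bij': assumes "(w::'a) \<noteq> 0" shows "(\<Sum>c\<in>UNIV. f (w * c)) = (\<Sum>c\<in>UNIV. f c)"
  using sum_mult_bij[OF assms, of f] by (simp add: mult.commute)

lemma sum_psi_mult: assumes "(w::'a) \<noteq> 0" shows "(\<Sum>c\<in>UNIV. psi (c * w)) = 0"
proof -
  have "(\<Sum>c\<in>UNIV. psi (c * w)) = (\<Sum>c\<in>UNIV. psi (c::'a))"
    by (rule sum_mult_bij[OF assms])
  thus ?thesis using sum_psi by simp
qed

lemma fiber_psi: "int (card {u::'a. hh u = v}) = 1 + psi v"
  unfolding fiber_hh psi_def by simp

lemma TT_cube: assumes "(t::'a) \<noteq> 0" shows "TT (c * t^3) = TT c"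
proof -
  have "TT (c * t^3) = (\<Sum>y\<in>UNIV. (\<lambda>z. psi (c * z^3)) (t * y))"
    unfolding TT_def by (simp add: power_mult_distrib mult.assoc mult.left_commute)
  also have "\<dots> = TT c" unfolding TT_def by (rule sum_mult_bij'[OF assms])
  finally show ?thesis .
qed

lemma sq_inj: "inj (\<lambda>y::'a. y^2)"
proof (rule injI)
  fix y z :: 'a assume "y^2 = z^2"
  hence "(y + z)^2 = 0" using sq_add add_self by simp
  hence "y + z = 0" by simp
  thus "y = z" by (metis add_self add_right_cancel)
qed

lemma sq_bij: "bij_betw (\<lambda>y::'a. y^2) UNIV UNIV"
  using sq_inj finite_UNIV_inj_surj[of "\<lambda>y::'a. y^2"] by (simp add: bij_betw_def)

lemma TT_sq: "TT ((c::'a)^2) = TT c"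
proof -
  have "TT c = (\<Sum>y\<in>UNIV. psi (c^2 * (y^2)^3))" unfolding TT_def
  proof (rule sum.cong)
    fix y :: 'a
    have "(c * y^3)^2 = c^2 * (y^2)^3" by (simp add: power_mult_distrib power_mult[symmetric] mult.commute)
    thus "psi (c * y^3) = psi (c^2 * (y^2)^3)" using psi_sq[of "c * y^3"] by simp
  qed simp
  also have "\<dots> = (\<Sum>z\<in>UNIV. psi (c^2 * z^3))"
    by (rule sum.reindex_bij_betw[OF sq_bij, of "\<lambda>z. psi (c^2 * z^3)"])
  finally show ?thesis unfolding TT_def by simp
qed

lemma TT_0: "TT (0::'a) = 4^k" unfolding TT_def using psi_0 qcard by simp

lemma sum_TT: "(\<Sum>c\<in>UNIV - {0::'a}. TT c) = 0"
proof -
  have "(\<Sum>c\<in>UNIV. TT (c::'a)) = (\<Sum>y\<in>UNIV. \<Sum>c\<in>UNIV. psi (c * (y::'a)^3))"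
    unfolding TT_def by (rule sum.swap)
  also have "\<dots> = (\<Sum>y\<in>UNIV. if (y::'a) = 0 then 4^k else 0)"
  proof (rule sum.cong)
    fix y :: 'a
    show "(\<Sum>c\<in>UNIV. psi (c * y^3)) = (if y = 0 then 4^k else 0)"
      using sum_psi_mult[of "y^3"] psi_0 qcard by auto
  qed simp
  also have "\<dots> = 4^k" by simp
  finally have "(\<Sum>c\<in>UNIV. TT (c::'a)) = 4^k" .
  moreover have "(\<Sum>c\<in>UNIV. TT (c::'a)) = TT (0::'a) + (\<Sum>c\<in>UNIV - {0::'a}. TT c)"
    by (rule sum.remove) auto
  ultimately show ?thesis using TT_0 by simp
qed

lemma sum_psi_nz: "(\<Sum>c\<in>UNIV - {0::'a}. psi (c * w)) = (if w = 0 then 4^k - 1 else -1)"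
proof -
  have "(\<Sum>c\<in>UNIV. psi (c * w)) = psi (0 * w) + (\<Sum>c\<in>UNIV - {0::'a}. psi (c * w))"
    by (rule sum.remove) auto
  moreover have "(\<Sum>c\<in>UNIV. psi (c * w)) = (if w = 0 then 4^k else 0)"
  proof (cases "w = 0")
    case True
    hence "(\<Sum>c\<in>UNIV. psi (c * w)) = (\<Sum>c\<in>(UNIV::'a set). 1)" using psi_0 by simp
    thus ?thesis using True qcard by simp
  next
    case False
    thus ?thesis using sum_psi_mult[OF False] by simp
  qed
  moreover have "psi (0 * w) = 1" using psi_0 by simp
  ultimately have "(\<Sum>c\<in>UNIV - {0::'a}. psi (c * w)) = (if w = 0 then 4^k else 0) - 1" by linarith
  thus ?thesis by (cases "w = 0") simp_all
qed

lemma card_Collect_sum: "int (card {y::'a. P y}) = (\<Sum>y\<in>UNIV. if P y then 1 else 0)"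
proof -
  have "(\<Sum>y\<in>UNIV. if P y then 1 else 0) = (\<Sum>y\<in>{y\<in>(UNIV::'a set). P y}. (1::int))"
    by (rule sum.inter_filter[symmetric]) simp
  also have "\<dots> = int (card {y::'a. P y})" by simp
  finally show ?thesis by simp
qed

lemma cube_eq_iff: "(y::'a)^3 + z^3 = 0 \<longleftrightarrow> z^3 = y^3"
  by (metis add_self add_right_cancel)

lemma sum_Z: "(\<Sum>y\<in>UNIV. int (card {z::'a. z^3 = y^3})) = 3 * 4^k - 2"
proof -
  have "(\<Sum>y\<in>UNIV. int (card {z::'a. z^3 = y^3})) = int (card {z::'a. z^3 = 0^3}) + (\<Sum>y\<in>UNIV - {0::'a}. int (card {z::'a. z^3 = y^3}))"
    by (rule sum.remove) auto
  also have "(\<Sum>y\<in>UNIV - {0::'a}. int (card {z::'a. z^3 = y^3})) = (\<Sum>y\<in>UNIV - {0::'a}. 3)"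
    by (rule sum.cong) (auto simp: card_cube_fiber)
  also have "{z::'a. z^3 = 0^3} = {0}" by auto
  finally show ?thesis using qcard q_ge by (simp add: card_Diff_singleton of_nat_diff)
qed

lemma sum_TT2: "(\<Sum>c\<in>UNIV - {0::'a}. (TT c)^2) = 2 * (4^k)^2 - 2 * 4^k"
proof -
  have sq: "(TT c)^2 = (\<Sum>y\<in>UNIV. \<Sum>z\<in>UNIV. psi (c * (y^3 + z^3)))" for c :: 'a
    unfolding TT_def power2_eq_square sum_product
    by (simp add: psi_add[symmetric] distrib_left)
  have "(\<Sum>c\<in>UNIV - {0::'a}. (TT c)^2) = (\<Sum>c\<in>UNIV - {0::'a}. \<Sum>y\<in>UNIV. \<Sum>z\<in>UNIV. psi (c * (y^3 + z^3)))"
    by (simp add: sq)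
  also have "\<dots> = (\<Sum>y\<in>UNIV. \<Sum>c\<in>UNIV - {0::'a}. \<Sum>z\<in>UNIV. psi (c * (y^3 + z^3)))"
    by (rule sum.swap)
  also have "\<dots> = (\<Sum>y\<in>UNIV. \<Sum>z\<in>UNIV. \<Sum>c\<in>UNIV - {0::'a}. psi (c * (y^3 + z^3)))"
    by (rule sum.cong[OF refl], rule sum.swap)
  also have "\<dots> = (\<Sum>y\<in>UNIV. \<Sum>z\<in>(UNIV::'a set). 4^k * (if z^3 = y^3 then 1 else 0) - 1)"
    by (rule sum.cong[OF refl], rule sum.cong[OF refl]) (simp add: sum_psi_nz cube_eq_iff)
  also have "\<dots> = (\<Sum>y\<in>UNIV. 4^k * int (card {z::'a. z^3 = y^3}) - 4^k)"
    by (rule sum.cong[OF refl]) (simp add: sum_subtractf sum_distrib_left[symmetric] card_Collect_sum qcard)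
  also have "\<dots> = 4^k * (3 * 4^k - 2) - 4^k * 4^k"
    by (simp add: sum_subtractf sum_distrib_left[symmetric] sum_Z qcard)
  finally show ?thesis by (simp add: algebra_simps power2_eq_square)
qed

lemma shift_sum:
  assumes "(j::'a) \<noteq> 0"
  shows "(\<Sum>c\<in>{c. c \<noteq> 0 \<and> c^m = 1}. F (j * c)) = (\<Sum>c\<in>{c. c \<noteq> 0 \<and> c^m = j^m}. F c)"
  by (rule sum.reindex_bij_witness[of _ "\<lambda>x. x / j" "\<lambda>x. j * x"])
     (use assms in \<open>auto simp: power_mult_distrib power_divide\<close>)

lemma part_sum:
  fixes F :: "'a \<Rightarrow> int"
  assumes inv: "\<And>c t. t \<noteq> 0 \<Longrightarrow> F (c * t^3) = F c"
    and g0: "g \<noteq> 0" and gnc: "g \<notin> cubes"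
  shows "(\<Sum>c\<in>UNIV - {0}. F c) = int m * (F 1 + F g + F (g^2))"
proof -
  define b where "b = g^m"
  have b1: "b \<noteq> 1" using cubes_char[OF g0] gnc b_def by simp
  have b3: "b^3 = 1" using pow_m_cube[OF g0] b_def by simp
  have bx: "b = xi \<or> b = xi^2" using b1 b3 cube_roots1 by blast
  have b0: "b \<noteq> 0" using b3 by auto
  have b21: "b^2 \<noteq> 1"
  proof
    assume h: "b^2 = 1"
    have "b^3 = b * b^2" by (simp add: power2_eq_square power3_eq_cube)
    thus False using h b3 b1 by simp
  qed
  have bb2: "b \<noteq> b^2"
  proof
    assume "b = b^2"
    hence "b * 1 = b * b" by (simp add: power2_eq_square)
    thus False using b0 b1 by simp
  qed
  define A where "A e = {c::'a. c \<noteq> 0 \<and> c^m = e}" for e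
  have cov: "UNIV - {0} = A 1 \<union> A b \<union> A (b^2)"
  proof -
    have "c^m = 1 \<or> c^m = b \<or> c^m = b^2" if "c \<noteq> 0" for c :: 'a
    proof -
      have "c^m = 1 \<or> c^m = xi \<or> c^m = xi^2" using pow_m_cube[OF that] cube_roots1 by blast
      moreover have "(xi = b \<or> xi = b^2) \<and> (xi^2 = b \<or> xi^2 = b^2)"
      proof (cases "b = xi")
        case True thus ?thesis by simp
      next
        case False
        hence bx2: "b = xi^2" using bx by simp
        have "xi^4 = xi" using xi3 power_add[of xi 3 1] by simp
        hence "b^2 = xi" unfolding bx2 by (simp add: power_mult[symmetric])
        thus ?thesis using bx2 by simp
      qed
      ultimately show ?thesis by metis
    qed
    thus ?thesis unfolding A_def by auto
  qed
  have sumA: "(\<Sum>c\<in>A (j^m). F c) = int m * F j" if "j \<noteq> 0" for j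
  proof -
    have "(\<Sum>c\<in>A (j^m). F c) = (\<Sum>c\<in>A 1. F (j * c))" unfolding A_def by (rule shift_sum[OF that, symmetric])
    also have "\<dots> = (\<Sum>c\<in>A 1. F j)"
    proof (rule sum.cong[OF refl])
      fix c assume "c \<in> A 1"
      hence "c \<in> cubes" unfolding A_def using cubes_char by auto
      then obtain t where "t \<noteq> 0" "c = t^3" unfolding cubes_def by auto
      thus "F (j * c) = F j" using inv by simp
    qed
    also have "A 1 = cubes"
    proof (rule set_eqI)
      fix c :: 'a
      have "c \<in> cubes \<Longrightarrow> c \<noteq> 0" unfolding cubes_def by auto
      thus "c \<in> A 1 \<longleftrightarrow> c \<in> cubes" unfolding A_def using cubes_char by blast
    qed
    finally show ?thesis using card_cubes by simp
  qed
  have "(\<Sum>c\<in>UNIV - {0}. F c) = (\<Sum>c\<in>A 1. F c) + (\<Sum>c\<in>A b. F c) + (\<Sum>c\<in>A (b^2). F c)"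
    unfolding cov
    by (subst sum.union_disjoint, simp, simp, use b1 b21 bb2 in \<open>force simp: A_def\<close>)+ simp
  also have "(\<Sum>c\<in>A 1. F c) = int m * F 1" using sumA[of 1] by simp
  also have "(\<Sum>c\<in>A b. F c) = int m * F g" using sumA[OF g0] b_def by simp
  also have "(\<Sum>c\<in>A (b^2). F c) = int m * F (g^2)" using sumA[of "g^2"] g0 b_def
    by (simp add: power_mult[symmetric] mult.commute)
  finally show ?thesis by (simp add: algebra_simps)
qed

lemma neg2_pow_mod: "((-2::int)^n) mod 3 = 1"
proof (induction n)
  case (Suc n)
  have "(-2::int)^Suc n mod 3 = (-2) * ((-2)^n mod 3) mod 3" by (simp only: power_Suc mod_mult_right_eq)
  thus ?case using Suc by simp
qed simp

lemma neg_mod3: "(x::int) mod 3 = 1 \<Longrightarrow> (-x) mod 3 = 2"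
  by (simp add: zmod_zminus1_eq_if)

lemma TT1_mod: "TT (1::'a) mod 3 = 1"
proof -
  have "TT (1::'a) = psi (0::'a) + (\<Sum>y\<in>UNIV - {0::'a}. psi (y^3))"
    unfolding TT_def by (subst sum.remove[of UNIV 0]) auto
  also have "(\<Sum>y\<in>UNIV - {0::'a}. psi (y^3)) = (\<Sum>c\<in>cubes. \<Sum>y\<in>{y. y \<in> UNIV - {0::'a} \<and> y^3 = c}. psi (y^3))"
    by (rule sum.group[symmetric]) (auto simp: cubes_def)
  also have "\<dots> = (\<Sum>c\<in>(cubes::'a set). 3 * psi c)"
  proof (rule sum.cong[OF refl])
    fix c assume "c \<in> (cubes::'a set)"
    then obtain y where y: "y \<noteq> 0" "c = y^3" unfolding cubes_def by auto
    have e: "{y'. y' \<in> UNIV - {0::'a} \<and> y'^3 = c} = {z. z^3 = y^3}" using y by auto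
    have "(\<Sum>y'\<in>{y'. y' \<in> UNIV - {0::'a} \<and> y'^3 = c}. psi (y'^3)) = (\<Sum>y'\<in>{z. z^3 = y^3}. psi c)"
      unfolding e using y by simp
    also have "\<dots> = 3 * psi c" using card_cube_fiber[OF y(1)] by simp
    finally show "(\<Sum>y'\<in>{y'. y' \<in> UNIV - {0::'a} \<and> y'^3 = c}. psi (y'^3)) = 3 * psi c" .
  qed
  finally have "TT (1::'a) = 1 + 3 * (\<Sum>c\<in>(cubes::'a set). psi c)" using psi_0 by (simp add: sum_distrib_left)
  thus ?thesis by simp
qed

lemma exists_noncube: "\<exists>g::'a. g \<noteq> 0 \<and> g \<notin> cubes"
proof (rule ccontr)
  assume "\<not> ?thesis"
  hence "UNIV - {0::'a} \<subseteq> cubes" by auto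
  hence "card (UNIV - {0::'a}) \<le> card (cubes::'a set)" by (intro card_mono) auto
  hence "4^k - 1 \<le> m" using card_cubes qcard by (simp add: card_Diff_singleton)
  thus False using three_m m_pos by linarith
qed

lemma TT1_val: "TT (1::'a) = (-2)^(k+1)"
proof -
  obtain g :: 'a where g: "g \<noteq> 0" "g \<notin> cubes" using exists_noncube by blast
  have inv: "TT (c * t^3) = TT c" if "t \<noteq> 0" for c t :: 'a using TT_cube[OF that] .
  have inv2: "(TT (c * t^3))^2 = (TT c)^2" if "t \<noteq> 0" for c t :: 'a using TT_cube[OF that] by simp
  have mpos: "int m > 0" using m_pos by simp
  have P1: "int m * (TT (1::'a) + TT g + TT (g^2)) = 0"
    using part_sum[of TT, OF inv g] sum_TT by simp
  hence "TT (1::'a) + 2 * TT g = 0" using mpos TT_sq[of g] by simp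
  hence t1: "TT (1::'a) = -2 * TT g" by simp
  have P2: "int m * ((TT (1::'a))^2 + (TT g)^2 + (TT (g^2))^2) = 2 * (4^k)^2 - 2 * 4^k"
    using part_sum[of "\<lambda>c. (TT c)^2", OF inv2 g] sum_TT2 by simp
  have n: "(4::nat)^k = 3*m+1" using three_m q_ge by linarith
  have "int ((4::nat)^k) = int (3*m+1)" using n by simp
  hence qm: "(4::int)^k = 3 * int m + 1" by simp
  have "int m * ((TT (1::'a))^2 + 2 * (TT g)^2) = int m * (6 * 4^k)"
    using P2 TT_sq[of g] unfolding qm by (simp add: algebra_simps power2_eq_square)
  hence "(TT (1::'a))^2 + 2 * (TT g)^2 = 6 * 4^k" using mpos by simp
  hence "6 * (TT g)^2 = 6 * 4^k" using t1 by (simp add: power2_eq_square algebra_simps)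
  hence "(TT (1::'a))^2 = 4 * 4^k" using t1 by (simp add: power2_eq_square algebra_simps)
  also have "4 * (4::int)^k = ((-2)^(k+1))^2"
  proof -
    have "((-2::int)^(k+1))^2 = ((-2)^2)^(k+1)"
      by (metis power_mult mult.commute)
    thus ?thesis by simp
  qed
  finally have "TT (1::'a) = (-2)^(k+1) \<or> TT (1::'a) = - ((-2)^(k+1))" using power2_eq_iff by blast
  moreover have "TT (1::'a) \<noteq> - ((-2)^(k+1))"
  proof
    assume "TT (1::'a) = - ((-2)^(k+1))"
    hence "TT (1::'a) mod 3 = 2" using neg_mod3[OF neg2_pow_mod[of "k+1"]] by simp
    thus False using TT1_mod by simp
  qed
  ultimately show ?thesis by blast
qed

lemma one_one: "(1::'a) + 1 = 0" by (rule add_self)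

lemma swap1: "(a::'a) = b + c \<longleftrightarrow> a + c = b"
proof
  assume "a = b + c" thus "a + c = b" by (simp only: add.assoc add_self add_0_right)
next
  assume h: "a + c = b"
  have "b + c = (a + c) + c" using h by simp
  also have "(a + c) + c = a" by (simp only: add.assoc add_self add_0_right)
  finally show "a = b + c" by simp
qed

lemma quad_root: "(x::'a)^2 + x + 1 = 0 \<longleftrightarrow> x = xi \<or> x = xi^2"
proof
  assume h: "x^2 + x + 1 = 0"
  have "(x - 1) * (x^2 + x + 1) = x^3 - 1" by (simp add: algebra_simps power2_eq_square power3_eq_cube)
  hence "x^3 = 1" using h by simp
  moreover have "x \<noteq> 1"
  proof
    assume "x = 1"
    hence "(1::'a) + 1 + 1 = 0" using h by simp
    thus False unfolding one_one by simp
  qed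
  ultimately show "x = xi \<or> x = xi^2" using cube_roots1 by blast
next
  assume "x = xi \<or> x = xi^2"
  moreover have "(xi^2)^2 + xi^2 + 1 = 0"
  proof -
    have "(xi^2)^2 = xi^3 * xi" by (simp add: power2_eq_square power3_eq_cube algebra_simps)
    hence "(xi^2)^2 = xi" using xi3 by simp
    thus ?thesis using xi_quad by (simp add: algebra_simps)
  qed
  ultimately show "x^2 + x + 1 = 0" using xi_quad by auto
qed

lemma a1_ne0: "(a::'a) \<noteq> 1 \<Longrightarrow> a + 1 \<noteq> 0"
  by (metis add_self add_right_cancel)

lemma f_sub:
  assumes "(a::'a) \<noteq> 1"
  shows "(a^2 + a + 1) / (a^2 + 1) = (1/(a+1))^2 + 1/(a+1) + 1"
proof -
  define b where "b = a + 1"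
  have b0: "b \<noteq> 0" using a1_ne0[OF assms] b_def by simp
  have d: "a^2 + 1 = b^2" unfolding b_def sq_add by simp
  have n: "a^2 + a + 1 = b^2 + b + 1"
  proof -
    have "b^2 + b + 1 = a^2 + a + 1 + (1 + 1)" unfolding b_def sq_add by (simp add: algebra_simps)
    thus ?thesis using one_one by simp
  qed
  have "(b^2 + b + 1) / b^2 = (1/b)^2 + 1/b + 1" using b0 by (simp add: field_simps power2_eq_square)
  thus ?thesis unfolding n d b_def[symmetric] .
qed

lemma main_sum:
  assumes d3: "delta^3 = (1::complex)" and d1: "delta \<noteq> 1"
  shows "(\<Sum>a \<in> UNIV - {-1, -xi, -(xi^2)}.
            cubic_char xi delta ((a^2 + a + 1) / (a^2 + 1))
          + (cubic_char xi delta ((a^2 + a + 1) / (a^2 + 1)))^2)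
         = -2 + (-2) ^ (k + 1)"
proof -
  define f where "f a = (a^2 + a + 1) / (a^2 + 1)" for a :: 'a
  define Lam where "Lam = UNIV - {1::'a, xi, xi^2}"
  define U where "U = UNIV - {0::'a, xi, xi^2}"
  have setL: "UNIV - {-1, -xi, -(xi^2)} = Lam" unfolding Lam_def neg_eq ..
  have fnz: "f a \<noteq> 0" if "a \<in> Lam" for a
  proof -
    have a1: "a \<noteq> 1" and ax: "\<not> (a = xi \<or> a = xi^2)" using that unfolding Lam_def by auto
    have "a^2 + a + 1 \<noteq> 0" using quad_root ax by blast
    moreover have "a^2 + 1 \<noteq> 0"
    proof -
      have "a^2 + 1 = (a+1)^2" using sq_add[of a 1] by simp
      thus ?thesis using a1_ne0[OF a1] by (simp only:) simp
    qed
    ultimately show ?thesis unfolding f_def by simp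
  qed
  have S1: "(\<Sum>a\<in>Lam. cubic_char xi delta (f a) + (cubic_char xi delta (f a))^2)
      = (\<Sum>a\<in>Lam. of_int (int (card {y. y^3 = f a}) - 1))"
  proof (rule sum.cong[OF refl])
    fix a assume a: "a \<in> Lam"
    show "cubic_char xi delta (f a) + (cubic_char xi delta (f a))^2 = of_int (int (card {y. y^3 = f a}) - 1)"
      using chi_val[OF fnz[OF a] d3 d1] card_fiber_gen[of "f a"] cubes_char[OF fnz[OF a]] fnz[OF a] by simp
  qed
  have S2: "(\<Sum>a\<in>Lam. int (card {y. y^3 = f a})) = (\<Sum>u\<in>U. int (card {y::'a. y^3 = u^2 + u + 1}))"
  proof (rule sum.reindex_bij_witness[of _ "\<lambda>u. 1 + 1/u" "\<lambda>a. 1/(a+1)"])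
    fix a assume a: "a \<in> Lam"
    hence a1: "a \<noteq> 1" unfolding Lam_def by auto
    have fa: "f a = (1/(a+1))^2 + 1/(a+1) + 1" unfolding f_def using f_sub[OF a1] .
    show "1 + 1 / (1 / (a + 1)) = a" using one_one by (simp add: add.assoc[symmetric])
    show "1 / (a + 1) \<in> U" unfolding U_def using a1_ne0[OF a1] fnz[OF a] fa quad_root by auto
    show "int (card {y. y^3 = (1/(a+1))^2 + 1/(a+1) + 1}) = int (card {y. y^3 = f a})" using fa by simp
  next
    fix u assume u: "u \<in> U"
    hence u0: "u \<noteq> 0" and ux: "\<not> (u = xi \<or> u = xi^2)" unfolding U_def by auto
    have e: "1 + 1/u + 1 = 1/u" using one_one by (metis add.commute add.left_commute add_0_right)
    show "1 / (1 + 1 / u + 1) = u" unfolding e using u0 by simp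
    have ne1: "1 + 1/u \<noteq> 1" using u0 by simp
    have "f (1 + 1/u) = u^2 + u + 1" unfolding f_def f_sub[OF ne1] e using u0 by simp
    moreover have "u^2 + u + 1 \<noteq> 0" using quad_root ux by blast
    ultimately have "f (1 + 1/u) \<noteq> 0" by simp
    hence "(1 + 1/u)^2 + (1 + 1/u) + 1 \<noteq> 0" unfolding f_def by auto
    hence "\<not> (1 + 1/u = xi \<or> 1 + 1/u = xi^2)" using quad_root by blast
    thus "1 + 1/u \<in> Lam" unfolding Lam_def using ne1 by auto
  qed
  have x0: "xi \<noteq> 0" using xi_ne0 .
  have x20: "xi^2 \<noteq> 0" using xi_ne0 by simp
  have S3: "(\<Sum>u\<in>UNIV. int (card {y::'a. y^3 = u^2 + u + 1})) = (\<Sum>u\<in>U. int (card {y::'a. y^3 = u^2 + u + 1})) + 5"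
  proof -
    have "(\<Sum>u\<in>UNIV. int (card {y::'a. y^3 = u^2 + u + 1})) = (\<Sum>u\<in>U. int (card {y::'a. y^3 = u^2 + u + 1})) + (\<Sum>u\<in>{0,xi,xi^2}. int (card {y::'a. y^3 = u^2 + u + 1}))"
      unfolding U_def by (subst sum.union_disjoint[symmetric]) (auto intro: sum.cong)
    also have "(\<Sum>u\<in>{0,xi,xi^2}. int (card {y::'a. y^3 = u^2 + u + 1})) = 5"
    proof -
      have c0: "card {y::'a. y^3 = 0^2 + 0 + 1} = 3" using card_cube_fiber[of 1] by simp
      have z: "{y::'a. y^3 = 0} = {0}" by auto
      have c1: "card {y::'a. y^3 = xi^2 + xi + 1} = 1" using xi_quad z by simp
      have c2: "card {y::'a. y^3 = (xi^2)^2 + xi^2 + 1} = 1" using quad_root[of "xi^2"] z by simp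
      show ?thesis using x0 x20 xi_ne_xi2 c0 c1 c2 by simp
    qed
    finally show ?thesis .
  qed
  have S4: "(\<Sum>u\<in>UNIV. int (card {y::'a. y^3 = u^2 + u + 1})) = 4^k + TT (1::'a)"
  proof -
    have iff: "y^3 = u^2 + u + 1 \<longleftrightarrow> hh u = y^3 + 1" for u y :: 'a
    proof -
      have e: "y^3 = (u^2+u) + 1 \<longleftrightarrow> y^3 + 1 = u^2 + u" by (rule swap1)
      show ?thesis unfolding hh_def e by (rule eq_commute)
    qed
    have "(\<Sum>u\<in>UNIV. int (card {y::'a. y^3 = u^2 + u + 1})) = (\<Sum>u\<in>UNIV. \<Sum>y\<in>UNIV. if hh u = (y::'a)^3 + 1 then 1 else 0)"
      unfolding card_Collect_sum iff ..
    also have "\<dots> = (\<Sum>y\<in>UNIV. \<Sum>u\<in>UNIV. if hh u = (y::'a)^3 + 1 then 1 else 0)" by (rule sum.swap)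
    also have "\<dots> = (\<Sum>y\<in>UNIV. int (card {u::'a. hh u = y^3 + 1}))" unfolding card_Collect_sum ..
    also have "\<dots> = (\<Sum>y\<in>UNIV. 1 + psi ((y::'a)^3))" unfolding fiber_psi psi_add psi_1 by simp
    also have "\<dots> = 4^k + TT (1::'a)" unfolding TT_def by (simp add: sum.distrib qcard)
    finally show ?thesis .
  qed
  have cL: "card Lam = 4^k - 3"
  proof -
    have "card {1::'a, xi, xi^2} = 3" using xi1 xi_sq_ne1 xi_ne_xi2 by auto
    thus ?thesis unfolding Lam_def using qcard by (simp add: card_Diff_subset)
  qed
  have "(\<Sum>a\<in>Lam. int (card {y. y^3 = f a}) - 1) = (4^k + TT (1::'a) - 5) - (4^k - 3)"
    using S2 S3 S4 cL q_ge by (simp add: sum_subtractf of_nat_diff)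
  also have "\<dots> = -2 + (-2)^(k+1)" using TT1_val by simp
  finally have I: "(\<Sum>a\<in>Lam. int (card {y. y^3 = f a}) - 1) = -2 + (-2)^(k+1)" .
  have "(\<Sum>a\<in>Lam. cubic_char xi delta (f a) + (cubic_char xi delta (f a))^2) = of_int (-2 + (-2)^(k+1))"
    unfolding S1 I[symmetric] by (simp add: of_int_sum)
  thus ?thesis unfolding setL f_def by simp
qed

end

theorem lemma4p4:
  fixes xi :: "'a::{field,finite}" and delta :: complex and k :: nat
  assumes "k > 0" and "card (UNIV::'a set) = 4 ^ k"
    and "xi ^ 3 = 1" and "xi \<noteq> 1"
    and "delta ^ 3 = 1" and "delta \<noteq> 1"
  shows "(\<Sum>a \<in> UNIV - {-1, -xi, -(xi^2)}.
            cubic_char xi delta ((a^2 + a + 1) / (a^2 + 1))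
          + (cubic_char xi delta ((a^2 + a + 1) / (a^2 + 1)))^2)
         = -2 + (-2) ^ (k + 1)"
proof -
  interpret L xi k using assms by unfold_locales auto
  show ?thesis using main_sum assms(5,6) by blast
qed

end
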